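(* Let $1\le p<\infty$, $\Omega=\mathbb K^{\mathbb Z_+}$, let $\mu=\bigotimes_{n\ge0}\mu_n$ be a product of Borel probability measures on $\mathbb K$, and let $\mathbf w$ be a sequence of non-zero scalars with $\sum_{n=1}^\infty\frac1{|w_1\cdots w_n|^p}<\infty$. If $\mu$ is $B_{\mathbf w}$-invariant and $\int_{\mathbb K}|t|^p\,d\mu_0(t)<\infty$, then $\mu(\ell_p(\mathbb Z_+))=1$.
   Context: $\mathbb K\in\{\mathbb R,\mathbb C\}$; $\Omega$ has the product topology and Borel $\sigma$-algebra, and $\ell_p(\mathbb Z_+)$ is a Borel subset of it. $B_{\mathbf w}:\Omega\to\Omega$ is $(B_{\mathbf w}t)_j=w_{j+1}t_{j+1}$; invariance means $\mu(B_{\mathbf w}^{-1}B)=\mu(B)$ for Borel $B$. *)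

theory Defs
  imports "HOL-Probability.Probability"
begin

definition weighted_backward_shift :: "(nat \<Rightarrow> 'k::real_normed_field) \<Rightarrow> (nat \<Rightarrow> 'k) \<Rightarrow> (nat \<Rightarrow> 'k)" where
  "weighted_backward_shift w t = (\<lambda>j. w (Suc j) * t (Suc j))"

definition lp_seq :: "real \<Rightarrow> (nat \<Rightarrow> 'k::real_normed_vector) set" where
  "lp_seq p = {x. summable (\<lambda>n. norm (x n) powr p)}"

end

theory Submission
  imports Defs
begin

theorem corollary5p4:
  fixes p :: real
    and \<mu> :: "nat \<Rightarrow> ('k::{real_normed_field, banach, second_countable_topology}) measure"
    and w :: "nat \<Rightarrow> 'k"
  assumes p: "1 \<le> p"
    and prob: "\<And>n. prob_space (\<mu> n)"
    and borel: "\<And>n. sets (\<mu> n) = sets borel"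
    and w_nz: "\<And>n. n \<ge> 1 \<Longrightarrow> w n \<noteq> 0"
    and w_sum: "summable (\<lambda>n. 1 / norm (\<Prod>i=1..Suc n. w i) powr p)"
    and inv: "\<And>B. B \<in> sets (PiM UNIV \<mu>) \<Longrightarrow>
       emeasure (PiM UNIV \<mu>) (weighted_backward_shift w -` B \<inter> space (PiM UNIV \<mu>))
         = emeasure (PiM UNIV \<mu>) B"
    and moment: "(\<integral>\<^sup>+ t. ennreal (norm t powr p) \<partial>(\<mu> 0)) < \<infinity>"
  shows "emeasure (PiM UNIV \<mu>) (lp_seq p) = 1"
proof -
  define M where "M = PiM UNIV \<mu>"
  define B where "B = weighted_backward_shift w"
  interpret M: prob_space M unfolding M_def by (rule prob_space_PiM) (use prob in auto)
  have spmu: "space (\<mu> n) = UNIV" for n using sets_eq_imp_space_eq[OF borel[of n]] by simp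
  have spM: "space M = UNIV" unfolding M_def space_PiM spmu by auto
  have measmu: "f \<in> borel_measurable (\<mu> j)" if "f \<in> borel_measurable borel" for j and f :: "'k \<Rightarrow> ennreal"
    using that by (simp add: measurable_cong_sets[OF borel[of j] refl])
  have comp: "(\<lambda>x. x j) \<in> measurable M (\<mu> j)" for j
    unfolding M_def by (rule measurable_component_singleton) simp
  have compb: "(\<lambda>x. x j) \<in> borel_measurable M" for j
    using comp[of j] by (simp add: measurable_cong_sets[OF refl borel[of j]])
  have Bmeas: "B \<in> measurable M M"
    unfolding M_def B_def weighted_backward_shift_def
  proof (rule measurable_PiM_single')
    fix i :: nat
    have "(\<lambda>x. w (Suc i) * x (Suc i)) \<in> borel_measurable M"
      using compb[of "Suc i"] by measurable
    then show "(\<lambda>x. w (Suc i) * x (Suc i)) \<in> measurable (Pi\<^sub>M UNIV \<mu>) (\<mu> i)"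
      unfolding M_def by (simp add: measurable_cong_sets[OF refl borel[of i]])
  qed (auto simp: space_PiM spmu)
  have distrB: "distr M M B = M"
  proof (rule measure_eqI)
    fix A assume "A \<in> sets (distr M M B)"
    then have A: "A \<in> sets M" by simp
    show "emeasure (distr M M B) A = emeasure M A"
      using inv[of A] A Bmeas by (simp add: emeasure_distr M_def B_def)
  qed simp
  have marg: "distr M (\<mu> j) (\<lambda>x. x j) = \<mu> j" for j
    unfolding M_def by (rule distr_PiM_component) (use prob in auto)
  define f :: "'k \<Rightarrow> ennreal" where "f t = ennreal (norm t powr p)" for t
  have fb: "f \<in> borel_measurable borel" unfolding f_def by measurable
  define I where "I j = (\<integral>\<^sup>+ t. f t \<partial>(\<mu> j))" for j
  have Icomp: "I j = (\<integral>\<^sup>+ x. f (x j) \<partial>M)" for j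
  proof -
    have "I j = (\<integral>\<^sup>+ t. f t \<partial>(distr M (\<mu> j) (\<lambda>x. x j)))" unfolding I_def marg ..
    also have "\<dots> = (\<integral>\<^sup>+ x. f (x j) \<partial>M)"
      by (rule nn_integral_distr[OF comp]) (simp add: measmu[OF fb])
    finally show ?thesis .
  qed
  have step: "I j = ennreal (norm (w (Suc j)) powr p) * I (Suc j)" for j
  proof -
    have "I j = (\<integral>\<^sup>+ x. f (x j) \<partial>(distr M M B))" unfolding Icomp distrB ..
    also have "\<dots> = (\<integral>\<^sup>+ x. f (B x j) \<partial>M)"
      by (rule nn_integral_distr[OF Bmeas]) (use compb fb in measurable)
    also have "\<dots> = (\<integral>\<^sup>+ x. ennreal (norm (w (Suc j)) powr p) * f (x (Suc j)) \<partial>M)"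
      unfolding B_def weighted_backward_shift_def f_def
      by (simp add: norm_mult powr_mult ennreal_mult)
    also have "\<dots> = ennreal (norm (w (Suc j)) powr p) * I (Suc j)"
      unfolding Icomp by (rule nn_integral_cmult) (use compb fb in measurable)
    finally show ?thesis .
  qed
  define c where "c n = 1 / norm (\<Prod>i=1..n. w i) powr p" for n
  have cpos: "c n \<ge> 0" for n unfolding c_def by simp
  have Ic: "I n = ennreal (c n) * I 0" for n
  proof (induction n)
    case 0 then show ?case by (simp add: c_def)
  next
    case (Suc n)
    have wn: "norm (w (Suc n)) > 0" using w_nz[of "Suc n"] by simp
    have "ennreal (1 / norm (w (Suc n)) powr p) * I n
        = ennreal (1 / norm (w (Suc n)) powr p) * ennreal (norm (w (Suc n)) powr p) * I (Suc n)"
      using step[of n] by (simp add: mult.assoc)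
    also have "\<dots> = I (Suc n)"
      using wn by (simp add: ennreal_mult[symmetric])
    finally have "I (Suc n) = ennreal (1 / norm (w (Suc n)) powr p) * (ennreal (c n) * I 0)"
      using Suc by simp
    also have "\<dots> = ennreal (c (Suc n)) * I 0"
    proof -
      have "c (Suc n) = (1 / norm (w (Suc n)) powr p) * c n"
        unfolding c_def by (simp add: prod.nat_ivl_Suc' norm_mult powr_mult mult.commute)
      then have "ennreal (c (Suc n)) = ennreal (1 / norm (w (Suc n)) powr p) * ennreal (c n)"
        by (simp only:) (rule ennreal_mult, simp, rule cpos)
      then show ?thesis by (simp add: mult.assoc)
    qed
    finally show ?case .
  qed
  have csum: "summable c"
    using w_sum unfolding c_def by (subst summable_Suc_iff[symmetric]) simp
  have "(\<integral>\<^sup>+ x. (\<Sum>n. f (x n)) \<partial>M) = (\<Sum>n. I n)"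
    unfolding Icomp by (rule nn_integral_suminf) (use compb fb in measurable)
  also have "\<dots> = (\<Sum>n. I 0 * ennreal (c n))"
  proof -
    have "I n = I 0 * ennreal (c n)" for n using Ic[of n] by (simp only: mult.commute)
    then show ?thesis by (intro arg_cong[where f=suminf] ext)
  qed
  also have "\<dots> = I 0 * ennreal (suminf c)" using suminf_ennreal2[OF cpos csum] by simp
  also have "\<dots> < \<infinity>" using moment unfolding I_def f_def
    by (simp add: ennreal_mult_less_top del: ennreal_suminf_cmult)
  finally have fin: "(\<integral>\<^sup>+ x. (\<Sum>n. f (x n)) \<partial>M) \<noteq> \<infinity>" by simp
  have smeas: "(\<lambda>x. \<Sum>n. f (x n)) \<in> borel_measurable M" using compb fb by measurable
  have ae: "AE x in M. (\<Sum>n. f (x n)) \<noteq> \<infinity>"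
    by (rule nn_integral_noteq_infinite[OF smeas fin])
  have lp: "lp_seq p = {x \<in> space M. (\<Sum>n. f (x n)) \<noteq> \<infinity>}"
  proof safe
    fix x assume "x \<in> (lp_seq p :: (nat \<Rightarrow> 'k) set)"
    then have "summable (\<lambda>n. norm (x n) powr p)" by (simp add: lp_seq_def)
    then show "(\<Sum>n. f (x n)) = \<infinity> \<Longrightarrow> False"
      unfolding f_def by (subst (asm) suminf_ennreal2) auto
  next
    fix x assume "x \<in> space M" "(\<Sum>n. f (x n)) \<noteq> \<infinity>"
    then show "x \<in> lp_seq p" unfolding lp_seq_def f_def
      by (auto intro: summable_suminf_not_top)
  qed (simp add: spM)
  have "emeasure M (lp_seq p) = 1"
    unfolding lp by (rule M.emeasure_eq_1_AE) (use smeas ae in auto)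
  then show ?thesis unfolding M_def .
qed

end
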